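(* For every $K>0$ there is a constant $C_1>0$ such that for every finite set $A\subset\mathbb{R}$ with $|A(A+A+A+A)|\le K|A|^2$, we have $|A+A|\le C_1|A|^{3/2}$.
   Context: $A+A=\{a+b:a,b\in A\}$ and $A(A+A+A+A)=\{a(b+c+d+e):a,b,c,d,e\in A\}$. *)

theory Defs
  imports Complex_Main
begin

definition sumset :: "real set \<Rightarrow> real set" where
  "sumset A = {a + b | a b. a \<in> A \<and> b \<in> A}"

definition prod_quad_sumset :: "real set \<Rightarrow> real set" where
  "prod_quad_sumset A = {a * (b + c + d + e) | a b c d e.
     a \<in> A \<and> b \<in> A \<and> c \<in> A \<and> d \<in> A \<and> e \<in> A}"

end

theory Submission
  imports Defs
begin

lemma fin_sumset: "finite A \<Longrightarrow> finite (sumset A)"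
proof -
  assume "finite A"
  have "sumset A = (\<lambda>(a,b). a+b) ` (A \<times> A)" unfolding sumset_def by auto
  thus ?thesis using \<open>finite A\<close> by simp
qed

lemma card_sumset_le: "finite A \<Longrightarrow> card (sumset A) \<le> card A * card A"
proof -
  assume "finite A"
  have "sumset A = (\<lambda>(a,b). a+b) ` (A \<times> A)" unfolding sumset_def by auto
  hence "card (sumset A) \<le> card (A \<times> A)" using card_image_le \<open>finite A\<close> by (metis finite_SigmaI)
  thus ?thesis by (simp add: card_cartesian_product)
qed

lemma fin_pq: "finite A \<Longrightarrow> finite (prod_quad_sumset A)"
proof -
  assume "finite A"
  have "prod_quad_sumset A \<subseteq> (\<lambda>(a,b,c,d,e). a*(b+c+d+e)) ` (A \<times> A \<times> A \<times> A \<times> A)"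
  proof
    fix x assume "x \<in> prod_quad_sumset A"
    then obtain a b c d e where h: "x = a*(b+c+d+e)" "a\<in>A" "b\<in>A" "c\<in>A" "d\<in>A" "e\<in>A"
      unfolding prod_quad_sumset_def by blast
    show "x \<in> (\<lambda>(a,b,c,d,e). a*(b+c+d+e)) ` (A \<times> A \<times> A \<times> A \<times> A)"
      by (rule image_eqI[of _ _ "(a,b,c,d,e)"]) (use h in simp_all)
  qed
  moreover have "finite ((\<lambda>(a,b,c,d,e). a*(b+c+d+e)) ` (A \<times> A \<times> A \<times> A \<times> A))"
    using \<open>finite A\<close> by simp
  ultimately show ?thesis by (rule finite_subset)
qed

lemma key:
  fixes A :: "real set"
  assumes fin: "finite A"
  shows "real (card {a\<in>A. a>0}) * real (card (sumset A)) * (real (card (sumset A)) - 1)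
         \<le> 6 * real (card (prod_quad_sumset A))^2"
proof -
  define B where "B = {a\<in>A. a>0}"
  define D where "D = sumset A"
  define P where "P = prod_quad_sumset A"
  define s where "s = card D"
  define L where "L = card P"
  have finD: "finite D" unfolding D_def using fin_sumset fin by auto
  have finP: "finite P" unfolding P_def using fin_pq fin by auto
  have finB: "finite B" unfolding B_def using fin by auto
  show ?thesis
  proof (cases "B = {} \<or> s \<le> 1")
    case True
    then show ?thesis
    proof
      assume "B = {}" hence h0: "{a\<in>A. a>0} = {}" by (simp add: B_def)
      show ?thesis by (subst h0) simp
    next
      assume "s \<le> 1"
      hence "real s * (real s - 1) \<le> 0" by (cases s) auto
      hence "real (card B) * real s * (real s - 1) \<le> 0"
        by (metis mult.assoc mult_nonneg_nonpos of_nat_0_le_iff)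
      moreover have "0 \<le> 6 * real (card (prod_quad_sumset A))^2" by simp
      ultimately show ?thesis unfolding B_def s_def D_def by linarith
    qed
  next
    case False
    then obtain a0 where a0: "a0 \<in> B" and s2: "s \<ge> 2" by auto
    have memP: "a*(x+d) \<in> P" if hA: "a \<in> A" and hd: "d \<in> D" and hx: "x \<in> D" for a d x
    proof -
      obtain b c where x: "x = b+c" "b\<in>A" "c\<in>A" using hx unfolding D_def sumset_def by blast
      obtain e f where d: "d = e+f" "e\<in>A" "f\<in>A" using hd unfolding D_def sumset_def by blast
      have "a*(x+d) = a*(b+c+e+f)" using x d by (simp add: add.assoc)
      thus ?thesis unfolding P_def prod_quad_sumset_def using x d hA by blast
    qed
    have "D \<noteq> {}" using s2 unfolding s_def by auto
    then obtain d0 where d0: "d0 \<in> D" by auto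
    have a0p: "a0 > 0" "a0 \<in> A" using a0 B_def by auto
    have "inj_on (\<lambda>x. a0*(x+d0)) D" using a0p by (auto simp: inj_on_def)
    moreover have "(\<lambda>x. a0*(x+d0)) ` D \<subseteq> P" using memP a0p d0 by auto
    ultimately have sL: "s \<le> L" unfolding s_def L_def using card_inj_on_le finP by blast
    define ds where "ds = sorted_list_of_set D"
    have len: "length ds = s" unfolding ds_def s_def by simp
    have setds: "set ds = D" unfolding ds_def using finD by simp
    have srt: "sorted_wrt (<) ds" unfolding ds_def by (rule strict_sorted_list_of_set)
    have mono: "ds!i < ds!j" if "i<j" "j<s" for i j
      using sorted_wrt_nth_less[OF srt that(1)] that len by simp
    have monole: "ds!i \<le> ds!j" if "i\<le>j" "j<s" for i j
      using mono[of i j] that by (cases "i = j") auto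
    have dsD: "ds!i \<in> D" if "i < s" for i using that len setds nth_mem by blast
    define cnt where "cnt y1 y2 = card {p\<in>P. y1<p \<and> p \<le> y2}" for y1 y2 :: real
    define \<delta> where "\<delta> a d k = cnt (a*(ds!k+d)) (a*(ds!(Suc k)+d))" for a d k
    have sumd: "(\<Sum>k<s-1. \<delta> a d k) \<le> L" if "a \<in> B" "d \<in> D" for a d
    proof -
      define S where "S k = {p\<in>P. a*(ds!k+d)<p \<and> p \<le> a*(ds!(Suc k)+d)}" for k
      have ap: "a > 0" using that B_def by auto
      have disj: "S i \<inter> S j = {}" if "i < j" "j < s - 1" for i j
      proof -
        have "ds!(Suc i) \<le> ds!j" using monole[of "Suc i" j] that by auto
        hence "a*(ds!(Suc i)+d) \<le> a*(ds!j+d)" using ap by simp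
        thus ?thesis unfolding S_def by auto
      qed
      have "card (\<Union>(S ` {..<s-1})) = (\<Sum>k<s-1. card (S k))"
        apply (rule card_UN_disjoint)
          apply simp
         apply (simp add: S_def finP)
        using disj by (metis Int_commute lessThan_iff linorder_neqE_nat)
      moreover have "\<Union>(S ` {..<s-1}) \<subseteq> P" unfolding S_def by auto
      hence "card (\<Union>(S ` {..<s-1})) \<le> L" unfolding L_def using finP card_mono by blast
      ultimately show ?thesis unfolding \<delta>_def cnt_def S_def by simp
    qed
    define T where "T = nat \<lceil>2 * real L / real (s-1)\<rceil>"
    have s1pos: "real (s-1) > 0" using s2 by simp
    have Lge: "real L \<ge> real (s-1)" using sL by simp
    define x where "x = 2 * real L / real (s-1)"
    have x0: "0 \<le> x" unfolding x_def by simp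
    have c0: "0 \<le> \<lceil>x\<rceil>" using x0 by simp
    have Tx: "real T = of_int \<lceil>x\<rceil>" unfolding T_def x_def[symmetric] using c0 by simp
    have cc: "of_int \<lceil>x\<rceil> - 1 < x" "x \<le> of_int \<lceil>x\<rceil>" using ceiling_correct by auto
    have "real T \<ge> x" using Tx cc by linarith
    hence T1: "real T \<ge> 2 * real L / real (s-1)" unfolding x_def .
    have T2: "real T \<le> 3 * real L / real (s-1)"
    proof -
      have "real T \<le> x + 1" using Tx cc by linarith
      hence "real T \<le> 2 * real L / real (s-1) + 1" unfolding x_def .
      moreover have "1 \<le> real L / real (s-1)" using Lge s1pos by simp
      ultimately show ?thesis by simp
    qed
    have "2 * real L / real (s-1) \<ge> 2" using Lge s1pos by (simp add: field_simps)
    hence "2 \<le> real T" using T1 by (rule order.trans)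
    hence Tpos: "real T > 0" by simp
    have bad: "real (card {k\<in>{..<s-1}. T \<le> \<delta> a d k}) \<le> real L / real T"
      if "a \<in> B" "d \<in> D" for a d
    proof -
      let ?Bd = "{k\<in>{..<s-1}. T \<le> \<delta> a d k}"
      have "card ?Bd * T = (\<Sum>k\<in>?Bd. T)" by simp
      also have "\<dots> \<le> (\<Sum>k\<in>?Bd. \<delta> a d k)" by (rule sum_mono) auto
      also have "\<dots> \<le> (\<Sum>k<s-1. \<delta> a d k)" by (rule sum_mono2) auto
      also have "\<dots> \<le> L" using sumd that .
      finally have "real (card ?Bd) * real T \<le> real L" by (metis of_nat_le_iff of_nat_mult)
      thus ?thesis using Tpos by (simp add: field_simps)
    qed
    define Gk where "Gk = (\<lambda>(a,d). {k\<in>{..<s-1}. \<delta> a d k < T})"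
    define G where "G = Sigma (B \<times> D) Gk"
    have good: "real (card (Gk (a,d))) \<ge> real (s-1) - real L / real T"
      if "a \<in> B" "d \<in> D" for a d
    proof -
      have "{..<s-1} = Gk (a,d) \<union> {k\<in>{..<s-1}. T \<le> \<delta> a d k}" unfolding Gk_def by auto
      hence "s - 1 \<le> card (Gk (a,d)) + card {k\<in>{..<s-1}. T \<le> \<delta> a d k}"
        by (metis card_Un_le card_lessThan)
      thus ?thesis using bad[OF that] by linarith
    qed
    have cardG: "card G = (\<Sum>x\<in>B\<times>D. card (Gk x))"
      unfolding G_def by (rule card_SigmaI) (auto simp: finB finD Gk_def)
    have lowG: "real (card G) \<ge> real (card B) * real s * (real (s-1) - real L / real T)"
    proof -
      have "real (card G) = (\<Sum>x\<in>B\<times>D. real (card (Gk x)))" using cardG by simp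
      also have "\<dots> \<ge> (\<Sum>x\<in>B\<times>D. real (s-1) - real L / real T)"
        by (rule sum_mono) (use good in auto)
      finally show ?thesis by (simp add: card_cartesian_product s_def)
    qed
    define f where "f = (\<lambda>((a,d),k). (k, a*(ds!k+d), \<delta> a d k))"
    have uniq: "u = v" if "u \<in> P" "v \<in> P" "y < u" "y < v" "cnt y u = cnt y v" for y u v
    proof (rule ccontr)
      assume "u \<noteq> v"
      have lt: "cnt y u < cnt y v" if "u \<in> P" "v \<in> P" "y < u" "u < v" for u v
      proof -
        have sub: "{p\<in>P. y<p \<and> p \<le> u} \<subseteq> {p\<in>P. y<p \<and> p \<le> v}"
          using that(4) by auto
        have v1: "v \<in> {p\<in>P. y<p \<and> p \<le> v}" using that(2,3,4) by simp
        have v2: "v \<notin> {p\<in>P. y<p \<and> p \<le> u}" using that(4) by simp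
        have "{p\<in>P. y<p \<and> p \<le> u} \<subset> {p\<in>P. y<p \<and> p \<le> v}"
          using sub v1 v2 by blast
        thus ?thesis unfolding cnt_def using finP by (simp add: psubset_card_mono)
      qed
      show False using lt[of u v] lt[of v u] that \<open>u\<noteq>v\<close> by (metis less_irrefl linorder_neqE)
    qed
    have injf: "inj_on f G"
    proof (rule inj_onI)
      fix x x' assume xG: "x \<in> G" and x'G: "x' \<in> G" and fx: "f x = f x'"
      obtain a d k where x: "x = ((a,d),k)" by (metis prod.collapse)
      obtain a' d' k' where x': "x' = ((a',d'),k')" by (metis prod.collapse)
      have h: "a \<in> B" "d \<in> D" "k < s-1" using xG x unfolding G_def Gk_def by auto
      have h': "a' \<in> B" "d' \<in> D" "k' < s-1" using x'G x' unfolding G_def Gk_def by auto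
      have kk: "k' = k" and y1: "a*(ds!k+d) = a'*(ds!k+d')"
        using fx x x' unfolding f_def by auto
      have dd: "\<delta> a d k = \<delta> a' d' k" using fx x x' unfolding f_def by auto
      have ap: "a > 0" "a \<in> A" "a' > 0" "a' \<in> A" using h h' B_def by auto
      have mk: "ds!k < ds!(Suc k)" using mono h by auto
      have "a*(ds!(Suc k)+d) = a'*(ds!(Suc k)+d')"
      proof (rule uniq)
        show "a*(ds!(Suc k)+d) \<in> P" using memP ap h dsD by simp
        show "a'*(ds!(Suc k)+d') \<in> P" using memP ap h' h dsD by simp
        show "a*(ds!k+d) < a*(ds!(Suc k)+d)" using ap mk by simp
        show "a*(ds!k+d) < a'*(ds!(Suc k)+d')" using ap mk y1 by simp
        show "cnt (a*(ds!k+d)) (a*(ds!(Suc k)+d)) = cnt (a*(ds!k+d)) (a'*(ds!(Suc k)+d'))"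
          using dd y1 unfolding \<delta>_def by simp
      qed
      hence "a*(ds!(Suc k) - ds!k) = a'*(ds!(Suc k) - ds!k)" using y1 by (simp add: algebra_simps)
      hence aa: "a = a'" using mk by simp
      hence "d = d'" using y1 ap by simp
      thus "x = x'" using x x' aa kk by simp
    qed
    have imf: "f ` G \<subseteq> {..<s-1} \<times> P \<times> {..<T}"
    proof
      fix z assume "z \<in> f ` G"
      then obtain a d k where "((a,d),k) \<in> G" "z = f ((a,d),k)" by auto
      hence h: "a \<in> B" "d \<in> D" "k < s-1" "\<delta> a d k < T" "z = (k, a*(ds!k+d), \<delta> a d k)"
        unfolding G_def Gk_def f_def by auto
      have "a*(ds!k+d) \<in> P" using memP h dsD B_def by auto
      thus "z \<in> {..<s-1} \<times> P \<times> {..<T}" using h by auto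
    qed
    have "card G \<le> card ({..<s-1} \<times> P \<times> {..<T})"
      using card_inj_on_le[OF injf imf] finP by simp
    hence "card G \<le> (s-1) * (L * T)" by (simp add: card_cartesian_product L_def)
    hence "real (card G) \<le> real ((s-1) * (L * T))" by (simp only: of_nat_le_iff)
    hence upG: "real (card G) \<le> real (s-1) * real L * real T"
      by (simp only: of_nat_mult mult.assoc)
    have "real L / real T \<le> real (s-1) / 2" using T1 s1pos Tpos
      by (simp add: field_simps)
    hence "real (card B) * real s * (real (s-1) / 2) \<le> real (card B) * real s * (real (s-1) - real L / real T)"
      by (intro mult_left_mono) auto
    also have "\<dots> \<le> real (s-1) * real L * real T" using lowG upG by linarith
    also have "\<dots> \<le> real (s-1) * real L * (3 * real L / real (s-1))"
      using T2 by (intro mult_left_mono) auto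
    also have "\<dots> = 3 * real L ^ 2" using s1pos by (simp add: power2_eq_square)
    finally have "real (card B) * real s * real (s-1) \<le> 6 * real L ^ 2" by simp
    moreover have "real (s-1) = real s - 1" using s2 by simp
    ultimately show ?thesis unfolding B_def s_def D_def L_def P_def by simp
  qed
qed


lemma neg_sym:
  fixes A :: "real set"
  assumes fin: "finite A"
  shows "card (sumset (uminus ` A)) = card (sumset A)"
    and "prod_quad_sumset (uminus ` A) = prod_quad_sumset A"
    and "card {a \<in> uminus ` A. a > 0} = card {a\<in>A. a < 0}"
proof -
  have "sumset (uminus ` A) = uminus ` sumset A"
  proof
    show "sumset (uminus ` A) \<subseteq> uminus ` sumset A"
    proof
      fix x assume "x \<in> sumset (uminus ` A)"
      then obtain a b where "x = -a + -b" "a \<in> A" "b \<in> A" unfolding sumset_def by auto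
      hence "-x \<in> sumset A" unfolding sumset_def by auto
      thus "x \<in> uminus ` sumset A" by (metis image_eqI minus_minus)
    qed
    show "uminus ` sumset A \<subseteq> sumset (uminus ` A)"
    proof
      fix x assume "x \<in> uminus ` sumset A"
      then obtain a b where "x = -(a + b)" "a \<in> A" "b \<in> A" unfolding sumset_def by auto
      hence "x = (-a) + (-b)" "-a \<in> uminus ` A" "-b \<in> uminus ` A" by auto
      thus "x \<in> sumset (uminus ` A)" unfolding sumset_def by blast
    qed
  qed
  thus "card (sumset (uminus ` A)) = card (sumset A)" by (simp add: card_image)
  show "prod_quad_sumset (uminus ` A) = prod_quad_sumset A"
  proof
    show "prod_quad_sumset (uminus ` A) \<subseteq> prod_quad_sumset A"
    proof
      fix x assume "x \<in> prod_quad_sumset (uminus ` A)"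
      then obtain a b c d e where h: "x = (-a)*((-b)+(-c)+(-d)+(-e))" "a\<in>A" "b\<in>A" "c\<in>A" "d\<in>A" "e\<in>A"
        unfolding prod_quad_sumset_def by auto
      hence "x = a*(b+c+d+e)" by (simp add: algebra_simps)
      thus "x \<in> prod_quad_sumset A" unfolding prod_quad_sumset_def using h by blast
    qed
    show "prod_quad_sumset A \<subseteq> prod_quad_sumset (uminus ` A)"
    proof
      fix x assume "x \<in> prod_quad_sumset A"
      then obtain a b c d e where h: "x = a*(b+c+d+e)" "a\<in>A" "b\<in>A" "c\<in>A" "d\<in>A" "e\<in>A"
        unfolding prod_quad_sumset_def by auto
      hence "x = (-a)*((-b)+(-c)+(-d)+(-e))" by (simp add: algebra_simps)
      moreover have "-a \<in> uminus ` A" "-b \<in> uminus ` A" "-c \<in> uminus ` A" "-d \<in> uminus ` A" "-e \<in> uminus ` A"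
        using h by auto
      ultimately show "x \<in> prod_quad_sumset (uminus ` A)" unfolding prod_quad_sumset_def by blast
    qed
  qed
  have "{a \<in> uminus ` A. a > 0} = uminus ` {a\<in>A. a < 0}" by force
  thus "card {a \<in> uminus ` A. a > 0} = card {a\<in>A. a < 0}" by (simp add: card_image)
qed

theorem theorem3p4:
  fixes K :: real
  assumes "K > 0"
  shows "\<exists>C1 > 0. \<forall>A :: real set. finite A \<longrightarrow>
           real (card (prod_quad_sumset A)) \<le> K * real (card A) ^ 2 \<longrightarrow>
           real (card (sumset A)) \<le> C1 * real (card A) powr (3/2)"
proof (intro exI[of _ "7*K+1"] conjI allI impI)
  show "7*K+1 > 0" using assms by simp
  fix A :: "real set"
  assume fin: "finite A" and hyp: "real (card (prod_quad_sumset A)) \<le> K * real (card A) ^ 2"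
  define n where "n = card A"
  define s where "s = card (sumset A)"
  define L where "L = card (prod_quad_sumset A)"
  define mp where "mp = card {a\<in>A. a>0}"
  define mn where "mn = card {a\<in>A. a<0}"
  have k1: "real mp * real s * (real s - 1) \<le> 6 * real L ^ 2"
    using key[OF fin] unfolding mp_def s_def L_def .
  have k2: "real mn * real s * (real s - 1) \<le> 6 * real L ^ 2"
    using key[of "uminus ` A"] fin neg_sym[OF fin] unfolding mn_def s_def L_def by simp
  have "A \<subseteq> ({a\<in>A. a>0} \<union> {a\<in>A. a<0}) \<union> {0}" by auto
  hence "n \<le> card ({a\<in>A. a>0} \<union> {a\<in>A. a<0} \<union> {0})" unfolding n_def
    using fin by (intro card_mono) auto
  also have "\<dots> \<le> card ({a\<in>A. a>0} \<union> {a\<in>A. a<0}) + card {0::real}" by (rule card_Un_le)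
  also have "\<dots> \<le> mp + mn + 1" unfolding mp_def mn_def using card_Un_le[of "{a\<in>A. a>0}" "{a\<in>A. a<0}"] by simp
  finally have nm: "real n - 1 \<le> real mp + real mn" by simp
  have sn: "s \<le> n * n" unfolding s_def n_def using card_sumset_le fin by simp
  have LK: "real L \<le> K * real n ^ 2" using hyp unfolding L_def n_def .
  show "real (card (sumset A)) \<le> (7*K+1) * real (card A) powr (3/2)"
  proof (cases "s \<le> 1")
    case True
    show ?thesis
    proof (cases "n = 0")
      case True
      hence "s = 0" using sn by simp
      thus ?thesis unfolding s_def n_def using True by (simp add: n_def)
    next
      case False
      hence "real n powr (3/2) \<ge> 1" by (simp add: ge_one_powr_ge_zero)
      moreover have "7*K+1 \<ge> 1" using assms by simp
      ultimately have "(7*K+1) * real n powr (3/2) \<ge> 1 * 1"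
        by (intro mult_mono) auto
      thus ?thesis using \<open>s \<le> 1\<close> unfolding s_def n_def by simp
    qed
  next
    case False
    hence s2: "s \<ge> 2" by simp
    have n2: "n \<ge> 2"
    proof (rule ccontr)
      assume "\<not> 2 \<le> n"
      hence "n \<le> 1" by simp
      hence "n * n \<le> 1 * 1" by (intro mult_le_mono)
      thus False using sn s2 by simp
    qed
    have ss: "real s - 1 \<ge> real s / 2" using s2 by simp
    have nn: "real n - 1 \<ge> real n / 2" using n2 by simp
    have "(real mp + real mn) * real s * (real s - 1) \<le> 12 * real L ^ 2"
      using k1 k2 by (simp add: algebra_simps)
    moreover have "(real n / 2) * real s * (real s / 2) \<le> (real mp + real mn) * real s * (real s - 1)"
      using nm nn ss s2 by (intro mult_mono) auto
    moreover have "real L ^ 2 \<le> (K * real n ^ 2) ^ 2" using LK by (intro power_mono) auto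
    ultimately have "(real n / 2) * real s * (real s / 2) \<le> 12 * (K * real n ^ 2) ^ 2" by linarith
    hence "real n * real s ^ 2 \<le> real n * (48 * K^2 * real n ^ 3)"
      by (simp add: power2_eq_square power3_eq_cube algebra_simps)
    moreover have np: "real n > 0" using n2 by simp
    ultimately have sq: "real s ^ 2 \<le> 48 * K^2 * real n ^ 3" by simp
    have "(real n powr (3/2)) ^ 2 = real n powr (3/2) * real n powr (3/2)" by (simp add: power2_eq_square)
    also have "\<dots> = real n powr (3/2 + 3/2)" by (rule powr_add[symmetric])
    also have "\<dots> = real n powr 3" by simp
    also have "\<dots> = real n ^ 3" using np by (intro powr_numeral) simp
    finally have pw: "(real n powr (3/2)) ^ 2 = real n ^ 3" .
    have e49: "(7*K * real n powr (3/2)) ^ 2 = 49 * (K^2 * real n ^ 3)"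
      by (simp only: power_mult_distrib pw) simp
    have "0 \<le> K^2 * real n ^ 3" by simp
    hence "real s ^ 2 \<le> (7*K * real n powr (3/2)) ^ 2" using sq e49 by linarith
    moreover have "0 \<le> 7*K * real n powr (3/2)"
      using assms by (intro mult_nonneg_nonneg) simp_all
    ultimately have "real s \<le> 7*K * real n powr (3/2)"
      by (rule power2_le_imp_le)
    also have "\<dots> \<le> (7*K+1) * real n powr (3/2)" by (simp add: distrib_right)
    finally show ?thesis unfolding s_def n_def .
  qed
qed

end
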